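(* For every admissible $v>9$ (i.e. $v\equiv 1$ or $3 \pmod 6$, $v>9$) and every Steiner triple system $\mathcal{S}=\mathrm{STS}(v)$, the graph $G_0=0$-$\mathrm{BIG}(\mathcal{S})$ is not silver. (For $v=7$ and $v=9$, $0$-$\mathrm{BIG}(\mathrm{STS}(v))$ is totally silver.)
   Context: A Steiner triple system $\mathrm{STS}(v)$ is a set $V$ of $v$ elements with a collection of $3$-subsets (blocks) such that every pair of elements lies in exactly one block; it exists iff $v\equiv 1,3\pmod 6$. The $0$-block intersection graph $0$-$\mathrm{BIG}$ has the blocks as vertices, two blocks adjacent iff they are disjoint; it is a regular graph. An $\alpha$-set of a graph is a maximum independent set. Let $G$ be an $r$-regular graph and $c$ a proper $(r+1)$-coloring of $G$. A vertex $x$ is rainbow with respect to $c$ if every one of the $r+1$ colors appears on $N[x]=N(x)\cup\{x\}$. Given an $\alpha$-set $I$, $c$ is silver with respect to $I$ if every $x\in I$ is rainbow; $G$ is silver if it admits a silver coloring with respect to some $\alpha$-set; $G$ is totally silver if it admits a proper $(r+1)$-coloring in which every vertex is rainbow. *)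

theory Defs
  imports Main
begin

definition is_STS :: "'a set \<Rightarrow> 'a set set \<Rightarrow> bool" where
  "is_STS V B \<longleftrightarrow> finite V \<and>
     (\<forall>b\<in>B. b \<subseteq> V \<and> card b = 3) \<and>
     (\<forall>x\<in>V. \<forall>y\<in>V. x \<noteq> y \<longrightarrow> (\<exists>!b. b \<in> B \<and> {x, y} \<subseteq> b))"

(* 0-block intersection graph: adjacency = disjointness of blocks (vertex set B) *)
definition zero_BIG_adj :: "'a set \<Rightarrow> 'a set \<Rightarrow> bool" where
  "zero_BIG_adj b b' \<longleftrightarrow> b \<inter> b' = {}"

definition nbhd :: "'b set \<Rightarrow> ('b \<Rightarrow> 'b \<Rightarrow> bool) \<Rightarrow> 'b \<Rightarrow> 'b set" where
  "nbhd Vs adj x = {y \<in> Vs. adj x y}"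

definition closed_nbhd :: "'b set \<Rightarrow> ('b \<Rightarrow> 'b \<Rightarrow> bool) \<Rightarrow> 'b \<Rightarrow> 'b set" where
  "closed_nbhd Vs adj x = insert x (nbhd Vs adj x)"

definition regular_graph :: "'b set \<Rightarrow> ('b \<Rightarrow> 'b \<Rightarrow> bool) \<Rightarrow> nat \<Rightarrow> bool" where
  "regular_graph Vs adj r \<longleftrightarrow> (\<forall>x\<in>Vs. card (nbhd Vs adj x) = r)"

definition independent_set :: "'b set \<Rightarrow> ('b \<Rightarrow> 'b \<Rightarrow> bool) \<Rightarrow> 'b set \<Rightarrow> bool" where
  "independent_set Vs adj I \<longleftrightarrow> I \<subseteq> Vs \<and> (\<forall>x\<in>I. \<forall>y\<in>I. \<not> adj x y)"

definition alpha_set :: "'b set \<Rightarrow> ('b \<Rightarrow> 'b \<Rightarrow> bool) \<Rightarrow> 'b set \<Rightarrow> bool" where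
  "alpha_set Vs adj I \<longleftrightarrow> independent_set Vs adj I \<and>
     (\<forall>J. independent_set Vs adj J \<longrightarrow> card J \<le> card I)"

definition proper_coloring :: "'b set \<Rightarrow> ('b \<Rightarrow> 'b \<Rightarrow> bool) \<Rightarrow> nat \<Rightarrow> ('b \<Rightarrow> nat) \<Rightarrow> bool" where
  "proper_coloring Vs adj k c \<longleftrightarrow> (\<forall>x\<in>Vs. c x < k) \<and>
     (\<forall>x\<in>Vs. \<forall>y\<in>Vs. adj x y \<longrightarrow> c x \<noteq> c y)"

definition rainbow :: "'b set \<Rightarrow> ('b \<Rightarrow> 'b \<Rightarrow> bool) \<Rightarrow> nat \<Rightarrow> ('b \<Rightarrow> nat) \<Rightarrow> 'b \<Rightarrow> bool" where
  "rainbow Vs adj r c x \<longleftrightarrow> {..<r+1} \<subseteq> c ` closed_nbhd Vs adj x"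

(* for an r-regular graph *)
definition silver :: "'b set \<Rightarrow> ('b \<Rightarrow> 'b \<Rightarrow> bool) \<Rightarrow> nat \<Rightarrow> bool" where
  "silver Vs adj r \<longleftrightarrow> (\<exists>I c. alpha_set Vs adj I \<and> proper_coloring Vs adj (r+1) c \<and>
     (\<forall>x\<in>I. rainbow Vs adj r c x))"

definition totally_silver :: "'b set \<Rightarrow> ('b \<Rightarrow> 'b \<Rightarrow> bool) \<Rightarrow> nat \<Rightarrow> bool" where
  "totally_silver Vs adj r \<longleftrightarrow> (\<exists>c. proper_coloring Vs adj (r+1) c \<and>
     (\<forall>x\<in>Vs. rainbow Vs adj r c x))"

end

theory Submission
  imports Defs
begin

locale sts =
  fixes V :: "'a set" and B :: "'a set set"
  assumes sts: "is_STS V B"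
begin

lemma sts3: "finite V" "\<forall>b\<in>B. b \<subseteq> V \<and> card b = 3"
   "\<forall>x\<in>V. \<forall>y\<in>V. x \<noteq> y \<longrightarrow> (\<exists>!b. b \<in> B \<and> {x, y} \<subseteq> b)"
  using sts unfolding is_STS_def
  by (rule conjunct1, rule conjunct1[OF conjunct2], rule conjunct2[OF conjunct2])
lemma finV: "finite V" by (rule sts3(1))
lemma blk_sub: "b \<in> B \<Longrightarrow> b \<subseteq> V" using sts3(2) by simp
lemma blk_card: "b \<in> B \<Longrightarrow> card b = 3" using sts3(2) by simp
lemma blk_fin: "b \<in> B \<Longrightarrow> finite b" by (rule card_ge_0_finite) (simp add: blk_card)
lemma blk_ne: "b \<in> B \<Longrightarrow> b \<noteq> {}" using blk_card by fastforce
lemma finB: "finite B"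
proof -
  have "B \<subseteq> Pow V" using blk_sub by blast
  moreover have "finite (Pow V)" using finV by simp
  ultimately show ?thesis by (rule finite_subset)
qed

lemma ex_blk: "p \<in> V \<Longrightarrow> q \<in> V \<Longrightarrow> p \<noteq> q \<Longrightarrow> \<exists>!b. b \<in> B \<and> {p,q} \<subseteq> b"
  using sts3(3) by simp

lemma share: "b1 \<in> B \<Longrightarrow> b2 \<in> B \<Longrightarrow> p \<noteq> q \<Longrightarrow> p \<in> b1 \<Longrightarrow> q \<in> b1 \<Longrightarrow> p \<in> b2 \<Longrightarrow> q \<in> b2 \<Longrightarrow> b1 = b2"
proof -
  assume a: "b1 \<in> B" "b2 \<in> B" "p \<noteq> q" "p \<in> b1" "q \<in> b1" "p \<in> b2" "q \<in> b2"
  hence "p \<in> V" "q \<in> V" using blk_sub by auto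
  from ex_blk[OF this a(3)] a show "b1 = b2" by auto
qed

definition blk :: "'a \<Rightarrow> 'a \<Rightarrow> 'a set" where
  "blk p q = (THE b. b \<in> B \<and> {p,q} \<subseteq> b)"

lemma blk: assumes "p \<in> V" "q \<in> V" "p \<noteq> q"
  shows "blk p q \<in> B" "p \<in> blk p q" "q \<in> blk p q"
proof -
  have "blk p q \<in> B \<and> {p,q} \<subseteq> blk p q"
    unfolding blk_def by (rule theI'[OF ex_blk[OF assms]])
  thus "blk p q \<in> B" "p \<in> blk p q" "q \<in> blk p q" by auto
qed

lemma blk_eq: "b \<in> B \<Longrightarrow> p \<in> b \<Longrightarrow> q \<in> b \<Longrightarrow> p \<noteq> q \<Longrightarrow> blk p q = b"
  using blk[of p q] blk_sub share by blast

definition star :: "'a \<Rightarrow> 'a set set" where "star p = {b \<in> B. p \<in> b}"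

lemma star_card2: assumes p: "p \<in> V" shows "card V = 2 * card (star p) + 1"
proof -
  have fs: "finite (star p)" using finB unfolding star_def by auto
  have U: "V - {p} = (\<Union>b\<in>star p. b - {p})"
  proof
    show "V - {p} \<subseteq> (\<Union>b\<in>star p. b - {p})"
    proof
      fix q assume q: "q \<in> V - {p}"
      hence "blk p q \<in> star p" "q \<in> blk p q - {p}" using blk[of p q] p unfolding star_def by auto
      thus "q \<in> (\<Union>b\<in>star p. b - {p})" by blast
    qed
    show "(\<Union>b\<in>star p. b - {p}) \<subseteq> V - {p}" using blk_sub unfolding star_def by auto
  qed
  have "card (\<Union>b\<in>star p. b - {p}) = (\<Sum>b\<in>star p. card (b - {p}))"
  proof (rule card_UN_disjoint[OF fs])
    show "\<forall>i\<in>star p. finite (i - {p})" using blk_fin unfolding star_def by auto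
    show "\<forall>i\<in>star p. \<forall>j\<in>star p. i \<noteq> j \<longrightarrow> (i - {p}) \<inter> (j - {p}) = {}"
      unfolding star_def using share by blast
  qed
  also have "\<dots> = (\<Sum>b\<in>star p. 2)"
    by (rule sum.cong) (auto simp: star_def blk_card blk_fin)
  finally have "card (V - {p}) = 2 * card (star p)" using U by simp
  thus ?thesis using p finV by (metis Suc_eq_plus1 card_Suc_Diff1)
qed

definition kk where "kk = (card V - 1) div 2"

lemma star_card: "p \<in> V \<Longrightarrow> card (star p) = kk"
  using star_card2 unfolding kk_def by force

lemma V_kk: assumes "V \<noteq> {}" shows "card V = 2 * kk + 1"
proof -
  obtain p where "p \<in> V" using assms by blast
  thus ?thesis using star_card2 star_card by simp
qed

lemma meet_card: assumes x: "x \<in> B" and V: "V \<noteq> {}"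
  shows "card {y\<in>B. y \<inter> x \<noteq> {}} = 3 * kk - 2"
proof -
  have fx: "finite x" using blk_fin x by auto
  have kk1: "kk \<ge> 1"
  proof -
    obtain w where "w \<in> x" using blk_ne x by blast
    hence "x \<in> star w" "w \<in> V" using x blk_sub unfolding star_def by auto
    hence "card (star w) \<ge> 1" using finB unfolding star_def
      by (metis (no_types, lifting) card_0_eq empty_iff finite_subset less_one linorder_not_less mem_Collect_eq subsetI)
    thus ?thesis using star_card \<open>w \<in> V\<close> by simp
  qed
  have U: "{y\<in>B. y \<inter> x \<noteq> {}} = insert x (\<Union>w\<in>x. star w - {x})"
    using x blk_ne unfolding star_def by auto
  have "card (\<Union>w\<in>x. star w - {x}) = (\<Sum>w\<in>x. card (star w - {x}))"
  proof (rule card_UN_disjoint[OF fx])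
    show "\<forall>i\<in>x. finite (star i - {x})" using finB unfolding star_def by auto
    show "\<forall>i\<in>x. \<forall>j\<in>x. i \<noteq> j \<longrightarrow> (star i - {x}) \<inter> (star j - {x}) = {}"
      unfolding star_def using share x by blast
  qed
  also have "\<dots> = (\<Sum>w\<in>x. kk - 1)"
  proof (rule sum.cong)
    fix w assume w: "w \<in> x"
    hence "w \<in> V" "x \<in> star w" using x blk_sub unfolding star_def by auto
    moreover have "finite (star w)" using finB unfolding star_def by auto
    ultimately show "card (star w - {x}) = kk - 1" using star_card by simp
  qed simp
  also have "\<dots> = 3 * (kk - 1)" using blk_card x by simp
  finally have c: "card (\<Union>w\<in>x. star w - {x}) = 3 * (kk - 1)" .
  define X where "X = (\<Union>w\<in>x. star w - {x})"
  have "x \<notin> X" unfolding X_def by auto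
  moreover have "finite X" unfolding X_def
    by (rule finite_subset[OF _ finB]) (auto simp: star_def)
  ultimately have "card (insert x X) = card X + 1" by simp
  hence "card (insert x (\<Union>w\<in>x. star w - {x})) = 3 * (kk - 1) + 1" using c unfolding X_def by simp
  thus ?thesis using U kk1 by simp
qed

lemma nbhd_eq: "nbhd B zero_BIG_adj x = B - {y\<in>B. y \<inter> x \<noteq> {}}"
  unfolding nbhd_def zero_BIG_adj_def by auto

lemma nbhd_card: "x \<in> B \<Longrightarrow> V \<noteq> {} \<Longrightarrow> card (nbhd B zero_BIG_adj x) = card B - (3 * kk - 2)"
  unfolding nbhd_eq using meet_card finB by (simp add: card_Diff_subset)

lemma cnbhd_card: assumes "x \<in> B" "V \<noteq> {}"
  shows "card (closed_nbhd B zero_BIG_adj x) = card B - (3 * kk - 2) + 1"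
proof -
  have "x \<notin> nbhd B zero_BIG_adj x" using blk_ne assms unfolding nbhd_def zero_BIG_adj_def by auto
  moreover have "finite (nbhd B zero_BIG_adj x)" using finB unfolding nbhd_def by auto
  ultimately show ?thesis unfolding closed_nbhd_def using nbhd_card assms by simp
qed

lemma cardB: "3 * card B = card V * kk"
proof -
  have e1: "(\<Sum>b\<in>B. \<Sum>p\<in>V. if p \<in> b then 1 else 0) = (\<Sum>b\<in>B. (3::nat))"
  proof (rule sum.cong)
    fix b assume b: "b \<in> B"
    have "(\<Sum>p\<in>V. if p \<in> b then 1 else (0::nat)) = card (V \<inter> b)"
      using finV by (simp add: sum.If_cases Int_def)
    also have "\<dots> = 3" using blk_sub[OF b] blk_card[OF b] by (simp add: Int_absorb1)
    finally show "(\<Sum>p\<in>V. if p \<in> b then 1 else 0) = (3::nat)" .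
  qed simp
  have e2: "(\<Sum>p\<in>V. \<Sum>b\<in>B. if p \<in> b then 1 else (0::nat)) = (\<Sum>p\<in>V. kk)"
  proof (rule sum.cong)
    fix p assume p: "p \<in> V"
    have "(\<Sum>b\<in>B. if p \<in> b then 1 else (0::nat)) = card (B \<inter> {b. p \<in> b})"
      using finB by (simp add: sum.If_cases Int_def)
    also have "B \<inter> {b. p \<in> b} = star p" unfolding star_def by auto
    finally show "(\<Sum>b\<in>B. if p \<in> b then 1 else (0::nat)) = kk" using star_card p by simp
  qed simp
  have "3 * card B = (\<Sum>b\<in>B. (3::nat))" by simp
  also have "\<dots> = (\<Sum>b\<in>B. \<Sum>p\<in>V. if p \<in> b then 1 else 0)" using e1 by simp
  also have "\<dots> = (\<Sum>p\<in>V. \<Sum>b\<in>B. if p \<in> b then 1 else (0::nat))"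
    by (rule sum.swap)
  also have "\<dots> = card V * kk" using e2 by simp
  finally show ?thesis .
qed

end

context sts begin

definition deg :: "'a set set \<Rightarrow> 'a \<Rightarrow> nat" where "deg I q = card {y\<in>I. q \<in> y}"

lemma sumdeg:
  assumes IB: "I \<subseteq> B" and ind: "\<forall>x\<in>I. \<forall>y\<in>I. x \<inter> y \<noteq> {}" and fI: "finite I"
    and y: "y \<in> I" and abc: "a \<in> y" "b \<in> y" "c \<in> y" "a \<noteq> b" "b \<noteq> c" "a \<noteq> c"
  shows "card I + 2 \<le> deg I a + deg I b + deg I c"
proof -
  have yB: "y \<in> B" using y IB by auto
  have "{a,b,c} \<subseteq> y" using abc by auto
  moreover have "card {a,b,c} = card y" using abc blk_card[OF yB] by simp
  ultimately have yeq: "y = {a,b,c}" using blk_fin[OF yB] by (metis card_subset_eq)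
  let ?A = "{y'\<in>I. a \<in> y'}" and ?Bb = "{y'\<in>I. b \<in> y'}" and ?C = "{y'\<in>I. c \<in> y'}"
  have "I \<subseteq> {y} \<union> (?A - {y}) \<union> (?Bb - {y}) \<union> (?C - {y})"
  proof
    fix x assume x: "x \<in> I"
    hence "x \<inter> y \<noteq> {}" using ind y by auto
    thus "x \<in> {y} \<union> (?A - {y}) \<union> (?Bb - {y}) \<union> (?C - {y})" using x yeq by auto
  qed
  hence "card I \<le> card ({y} \<union> (?A - {y}) \<union> (?Bb - {y}) \<union> (?C - {y}))"
    using fI by (intro card_mono) auto
  also have "\<dots> \<le> 1 + card (?A - {y}) + card (?Bb - {y}) + card (?C - {y})"
  proof -
    have u: "card (X \<union> Y) \<le> card X + card Y" for X Y :: "'a set set" by (rule card_Un_le)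
    show ?thesis using u[of "{y} \<union> (?A - {y}) \<union> (?Bb - {y})" "?C - {y}"]
        u[of "{y} \<union> (?A - {y})" "?Bb - {y}"] u[of "{y}" "?A - {y}"] by simp
  qed
  also have "\<dots> = 1 + (deg I a - 1) + (deg I b - 1) + (deg I c - 1)"
    unfolding deg_def using y abc fI by (simp add: card_Diff_singleton)
  finally have "card I \<le> 1 + (deg I a - 1) + (deg I b - 1) + (deg I c - 1)" .
  moreover have "deg I a \<ge> 1" "deg I b \<ge> 1" "deg I c \<ge> 1" unfolding deg_def using y abc fI
    by (auto intro!: Suc_leI card_gt_0_iff[THEN iffD2])
  ultimately show ?thesis by linarith
qed

lemma two_blocks: "b1 \<in> B \<Longrightarrow> b2 \<in> B \<Longrightarrow> b1 \<noteq> b2 \<Longrightarrow> a \<in> b1 \<Longrightarrow> a \<in> b2 \<Longrightarrow> b1 \<inter> b2 = {a}"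
  using share by blast

lemma deg3:
  assumes IB: "I \<subseteq> B" and ind: "\<forall>x\<in>I. \<forall>y\<in>I. x \<inter> y \<noteq> {}" and fI: "finite I"
    and d3: "deg I a = 3"
  shows "\<Union>I = \<Union>{y\<in>I. a \<in> y}" "card (\<Union>I) = 7"
proof -
  obtain T1 T2 T3 where T: "{y\<in>I. a \<in> y} = {T1,T2,T3}" "T1 \<noteq> T2" "T2 \<noteq> T3" "T1 \<noteq> T3"
    using d3 unfolding deg_def card_3_iff by blast
  have TI: "T1 \<in> I" "T2 \<in> I" "T3 \<in> I" "a \<in> T1" "a \<in> T2" "a \<in> T3" using T(1) by blast+
  have TB: "T1 \<in> B" "T2 \<in> B" "T3 \<in> B" using TI IB by auto
  have int: "T1 \<inter> T2 = {a}" "T2 \<inter> T3 = {a}" "T1 \<inter> T3 = {a}"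
    using two_blocks TB TI T(2-4) by auto
  have sub: "\<Union>I \<subseteq> T1 \<union> T2 \<union> T3"
  proof
    fix w assume "w \<in> \<Union>I"
    then obtain y where y: "y \<in> I" "w \<in> y" by auto
    have yB: "y \<in> B" using y IB by auto
    show "w \<in> T1 \<union> T2 \<union> T3"
    proof (cases "a \<in> y")
      case True
      hence "y \<in> {y\<in>I. a \<in> y}" using y by simp
      hence "y = T1 \<or> y = T2 \<or> y = T3" unfolding T(1) by simp
      thus ?thesis using y by blast
    next
      case False
      obtain w1 where w1: "w1 \<in> y" "w1 \<in> T1" using ind y TI by blast
      obtain w2 where w2: "w2 \<in> y" "w2 \<in> T2" using ind y TI by blast
      obtain w3 where w3: "w3 \<in> y" "w3 \<in> T3" using ind y TI by blast
      have dist: "w1 \<noteq> w2" "w2 \<noteq> w3" "w1 \<noteq> w3" using int w1 w2 w3 False by (metis IntI singletonD)+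
      have "{w1,w2,w3} \<subseteq> y" using w1 w2 w3 by auto
      moreover have "card {w1,w2,w3} = card y" using dist blk_card[OF yB] by simp
      ultimately have "y = {w1,w2,w3}" using blk_fin[OF yB] by (metis card_subset_eq)
      thus ?thesis using y w1 w2 w3 by auto
    qed
  qed
  moreover have "T1 \<union> T2 \<union> T3 \<subseteq> \<Union>I" using TI by auto
  ultimately have eq: "\<Union>I = T1 \<union> T2 \<union> T3" by blast
  thus "\<Union>I = \<Union>{y\<in>I. a \<in> y}" unfolding T(1) by (simp add: Un_assoc)
  have f: "finite T1" "finite T2" "finite T3" using TB blk_fin by auto
  have c3: "card T1 = 3" "card T2 = 3" "card T3 = 3" using blk_card TB by auto
  have c12: "card (T1 \<union> T2) = 5"
    using card_Un_Int[OF f(1) f(2)] int(1) c3 by simp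
  have "(T1 \<union> T2) \<inter> T3 = {a}" using int by blast
  moreover have "finite (T1 \<union> T2)" using f by simp
  ultimately have "card (T1 \<union> T2 \<union> T3) = 7"
    using card_Un_Int[of "T1 \<union> T2" T3] f(3) c12 c3 by simp
  thus "card (\<Union>I) = 7" using eq by simp
qed

end

context sts begin

lemma star_fin: "finite (star p)" using finB unfolding star_def by auto

lemma caseA:
  assumes IB: "I \<subseteq> B" and ind: "\<forall>x\<in>I. \<forall>y\<in>I. x \<inter> y \<noteq> {}" and fI: "finite I"
    and kI: "kk \<le> card I" and p: "p \<in> V" and d4: "deg I p \<ge> 4"
  shows "I = star p"
proof -
  have "I \<subseteq> star p"
  proof
    fix y assume y: "y \<in> I"
    have yB: "y \<in> B" using y IB by auto
    have "p \<in> y"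
    proof (rule ccontr)
      assume np: "p \<notin> y"
      let ?Ip = "{t\<in>I. p \<in> t}"
      define g where "g t = (SOME w. w \<in> t \<inter> y)" for t
      have g: "g t \<in> t \<inter> y" if "t \<in> ?Ip" for t
      proof -
        have "t \<inter> y \<noteq> {}" using ind that y by auto
        thus ?thesis unfolding g_def by (metis all_not_in_conv someI_ex)
      qed
      have "inj_on g ?Ip"
      proof (rule inj_onI)
        fix t1 t2 assume t: "t1 \<in> ?Ip" "t2 \<in> ?Ip" "g t1 = g t2"
        have "g t1 \<in> t1" "g t2 \<in> t2" "g t1 \<in> y" using g t(1,2) by auto
        hence "g t1 \<in> t1" "g t1 \<in> t2" "g t1 \<in> y" using t(3) by auto
        moreover have "g t1 \<noteq> p" using \<open>g t1 \<in> y\<close> np by auto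
        moreover have "t1 \<in> B" "t2 \<in> B" "p \<in> t1" "p \<in> t2" using t IB by auto
        ultimately show "t1 = t2" using share by metis
      qed
      moreover have "g ` ?Ip \<subseteq> y" using g by auto
      ultimately have "card ?Ip \<le> card y" using blk_fin[OF yB] by (rule card_inj_on_le)
      thus False using d4 blk_card[OF yB] unfolding deg_def by simp
    qed
    thus "y \<in> star p" using yB unfolding star_def by simp
  qed
  moreover have "card I = card (star p)"
    using card_mono[OF star_fin \<open>I \<subseteq> star p\<close>] kI star_card[OF p] by simp
  ultimately show ?thesis using star_fin card_subset_eq by blast
qed

lemma caseA_props:
  assumes IB: "I = star p" and p: "p \<in> V" and k1: "kk \<ge> 1"
  shows "\<forall>z\<in>B - I. card {y\<in>I. y \<inter> z \<noteq> {}} = 3" "\<forall>q\<in>V. \<exists>y\<in>I. q \<in> y"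
proof -
  show "\<forall>z\<in>B - I. card {y\<in>I. y \<inter> z \<noteq> {}} = 3"
  proof
    fix z assume z: "z \<in> B - I"
    hence zB: "z \<in> B" and pz: "p \<notin> z" using IB unfolding star_def by auto
    have wV: "w \<in> V" "w \<noteq> p" if "w \<in> z" for w using that blk_sub zB pz by auto
    have eq: "{y\<in>I. y \<inter> z \<noteq> {}} = (\<lambda>w. blk p w) ` z"
    proof
      show "{y\<in>I. y \<inter> z \<noteq> {}} \<subseteq> (\<lambda>w. blk p w) ` z"
      proof
        fix y assume y: "y \<in> {y\<in>I. y \<inter> z \<noteq> {}}"
        then obtain w where w: "w \<in> y" "w \<in> z" by auto
        have "y \<in> B" "p \<in> y" using y IB unfolding star_def by auto
        hence "blk p w = y" using blk_eq w wV by metis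
        thus "y \<in> (\<lambda>w. blk p w) ` z" using w by auto
      qed
      show "(\<lambda>w. blk p w) ` z \<subseteq> {y\<in>I. y \<inter> z \<noteq> {}}"
      proof
        fix y assume "y \<in> (\<lambda>w. blk p w) ` z"
        then obtain w where w: "w \<in> z" "y = blk p w" by auto
        have "y \<in> B" "p \<in> y" "w \<in> y" using blk[of p w] wV[OF w(1)] p w(2) by auto
        thus "y \<in> {y\<in>I. y \<inter> z \<noteq> {}}" using IB w(1) unfolding star_def by auto
      qed
    qed
    have "inj_on (\<lambda>w. blk p w) z"
    proof (rule inj_onI)
      fix w1 w2 assume w: "w1 \<in> z" "w2 \<in> z" "blk p w1 = blk p w2"
      show "w1 = w2"
      proof (rule ccontr)
        assume ne: "w1 \<noteq> w2"
        have "blk p w1 \<in> B" "w1 \<in> blk p w1" "w2 \<in> blk p w1" "p \<in> blk p w1"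
          using blk[of p w1] blk[of p w2] wV w p by auto
        hence "blk p w1 = z" using share[OF _ zB ne] w by metis
        thus False using \<open>p \<in> blk p w1\<close> pz by simp
      qed
    qed
    thus "card {y\<in>I. y \<inter> z \<noteq> {}} = 3" using eq card_image blk_card[OF zB] by metis
  qed
  show "\<forall>q\<in>V. \<exists>y\<in>I. q \<in> y"
  proof
    fix q assume q: "q \<in> V"
    show "\<exists>y\<in>I. q \<in> y"
    proof (cases "q = p")
      case True
      have "star p \<noteq> {}" using star_card[OF p] k1 by auto
      thus ?thesis using True IB unfolding star_def by auto
    next
      case False
      thus ?thesis using blk[of p q] p q IB unfolding star_def by auto
    qed
  qed
qed

end

context sts begin

lemma deg_le_card: "finite I \<Longrightarrow> deg I q \<le> card I"
  unfolding deg_def by (rule card_mono) auto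

lemma caseB:
  assumes IB: "I \<subseteq> B" and ind: "\<forall>x\<in>I. \<forall>y\<in>I. x \<inter> y \<noteq> {}" and fI: "finite I"
    and kI: "kk \<le> card I" and k6: "kk \<ge> 6" and Vne: "V \<noteq> {}"
    and d3: "\<forall>q. deg I q \<le> 3"
  shows "kk = 7 \<and> card I = 7 \<and> (\<forall>z\<in>B - I. card {y\<in>I. y \<inter> z \<noteq> {}} = 3)"
proof -
  have cV: "card V = 2 * kk + 1" using V_kk Vne by simp
  obtain y0 where y0: "y0 \<in> I" using kI k6 by fastforce
  have y0B: "y0 \<in> B" using y0 IB by auto
  obtain a b c where abc: "y0 = {a,b,c}" "a \<noteq> b" "b \<noteq> c" "a \<noteq> c"
    using blk_card[OF y0B] unfolding card_3_iff by blast
  have s0: "card I + 2 \<le> deg I a + deg I b + deg I c"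
    using sumdeg[OF IB ind fI y0] abc by auto
  have f7: "card I \<le> 7" using s0 d3[rule_format, of a] d3[rule_format, of b] d3[rule_format, of c] by linarith
  have "deg I a = 3 \<or> deg I b = 3 \<or> deg I c = 3"
    using s0 d3[rule_format, of a] d3[rule_format, of b] d3[rule_format, of c] kI k6 by linarith
  then obtain a0 where a0: "deg I a0 = 3" by blast
  define D where "D = \<Union>I"
  have cD: "card D = 7" using deg3[OF IB ind fI a0] unfolding D_def by simp
  have fD: "finite D" using cD by (metis card.infinite zero_neq_numeral)
  have DV: "D \<subseteq> V" unfolding D_def using IB blk_sub by blast
  have Cov: "\<exists>y\<in>I. d \<in> y \<and> d' \<in> y" if "d \<in> D" "d' \<in> D" "deg I d = 3" for d d'
  proof -
    have "D = \<Union>{y\<in>I. d \<in> y}" using deg3(1)[OF IB ind fI that(3)] unfolding D_def by simp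
    thus ?thesis using that(2) by auto
  qed
  have yD: "y \<subseteq> D" if "y \<in> I" for y using that unfolding D_def by auto
  have Key: "deg I d1 \<le> 2"
    if q: "q \<in> V - D" and d: "d1 \<in> D" "d2 \<in> D" "d1 \<noteq> d2" "blk q d1 = blk q d2" for q d1 d2
  proof (rule ccontr)
    assume "\<not> deg I d1 \<le> 2"
    hence "deg I d1 = 3" using d3[rule_format, of d1] by simp
    then obtain y where y: "y \<in> I" "d1 \<in> y" "d2 \<in> y" using Cov d by blast
    have qd: "q \<noteq> d1" "q \<noteq> d2" using q d by auto
    have t: "blk q d1 \<in> B" "d1 \<in> blk q d1" "d2 \<in> blk q d1" "q \<in> blk q d1"
      using blk[of q d1] blk[of q d2] q d DV qd by auto
    have "y \<in> B" using y IB by auto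
    hence "y = blk q d1" using share[OF _ t(1) d(3)] y t by metis
    hence "q \<in> D" using yD y(1) t(4) by auto
    thus False using q by simp
  qed
  have blkq: "blk q d \<in> star q" "d \<in> blk q d" if "q \<in> V - D" "d \<in> D" for q d
  proof -
    have "q \<noteq> d" using that by auto
    thus "blk q d \<in> star q" "d \<in> blk q d" using blk[of q d] that DV unfolding star_def by auto
  qed
  show ?thesis
  proof (cases "kk = 6")
    case True
    define L where "L = {d\<in>D. deg I d \<le> 2}"
    have fL: "finite L" using fD unfolding L_def by simp
    have yL: "card (y \<inter> L) \<le> 1" if y: "y \<in> I" for y
    proof -
      have yB: "y \<in> B" using y IB by auto
      have "\<forall>u\<in>y \<inter> L. \<forall>w\<in>y \<inter> L. u = w"
      proof (intro ballI, rule ccontr)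
        fix u w assume u: "u \<in> y \<inter> L" and w: "w \<in> y \<inter> L" and ne: "u \<noteq> w"
        have "card (y - {u,w}) = 1" using blk_card[OF yB] u w ne blk_fin[OF yB]
          by (simp add: card_Diff_subset)
        then obtain x3 where x3: "y - {u,w} = {x3}" using card_1_singletonE by blast
        have "card I + 2 \<le> deg I u + deg I w + deg I x3"
          using sumdeg[OF IB ind fI y, of u w x3] u w ne x3 by auto
        moreover have "deg I u \<le> 2" "deg I w \<le> 2" using u w unfolding L_def by auto
        ultimately show False using d3[rule_format, of x3] kI True by linarith
      qed
      thus ?thesis using fL by (simp add: card_le_Suc0_iff_eq)
    qed
    have cL: "card L \<le> 3"
    proof -
      have "L \<subseteq> (\<Union>T\<in>{y\<in>I. a0 \<in> y}. T \<inter> L)"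
        using deg3(1)[OF IB ind fI a0] unfolding L_def D_def by auto
      hence "card L \<le> card (\<Union>T\<in>{y\<in>I. a0 \<in> y}. T \<inter> L)"
        using fI fL by (intro card_mono) auto
      also have "\<dots> \<le> (\<Sum>T\<in>{y\<in>I. a0 \<in> y}. card (T \<inter> L))"
        using fI by (intro card_UN_le) auto
      also have "\<dots> \<le> (\<Sum>T\<in>{y\<in>I. a0 \<in> y}. 1)"
        using yL by (intro sum_mono) auto
      also have "\<dots> = 3" using a0 unfolding deg_def by simp
      finally show ?thesis .
    qed
    have Pq: "\<exists>e. e \<subseteq> L \<and> card e = 2 \<and> (\<exists>t\<in>B. q \<in> t \<and> e \<subseteq> t)" if q: "q \<in> V - D" for q
    proof -
      have "\<not> inj_on (blk q) D"
      proof
        assume "inj_on (blk q) D"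
        hence "card D \<le> card (star q)" using blkq[OF q] star_fin by (intro card_inj_on_le) auto
        thus False using cD star_card[of q] q True by simp
      qed
      then obtain d1 d2 where d: "d1 \<in> D" "d2 \<in> D" "d1 \<noteq> d2" "blk q d1 = blk q d2"
        unfolding inj_on_def by blast
      have "deg I d1 \<le> 2" using Key[OF q d] .
      moreover have "deg I d2 \<le> 2" using Key[OF q d(2) d(1)] d(3,4) by simp
      ultimately have eL: "{d1,d2} \<subseteq> L" using d unfolding L_def by auto
      have qd: "q \<noteq> d1" "q \<noteq> d2" using q d by auto
      have "blk q d1 \<in> B" "q \<in> blk q d1" "{d1,d2} \<subseteq> blk q d1"
        using blk[of q d1] blk[of q d2] q d DV qd by auto
      thus ?thesis using eL d(3) by (intro exI[of _ "{d1,d2}"]) auto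
    qed
    define psi where "psi q = (SOME e. e \<subseteq> L \<and> card e = 2 \<and> (\<exists>t\<in>B. q \<in> t \<and> e \<subseteq> t))" for q
    have psi: "psi q \<subseteq> L \<and> card (psi q) = 2 \<and> (\<exists>t\<in>B. q \<in> t \<and> psi q \<subseteq> t)" if "q \<in> V - D" for q
      unfolding psi_def by (rule someI_ex[OF Pq[OF that]])
    have "inj_on psi (V - D)"
    proof (rule inj_onI, rule ccontr)
      fix q1 q2 assume q: "q1 \<in> V - D" "q2 \<in> V - D" "psi q1 = psi q2" and ne: "q1 \<noteq> q2"
      obtain t1 where t1: "t1 \<in> B" "q1 \<in> t1" "psi q1 \<subseteq> t1" using psi[OF q(1)] by blast
      obtain t2 where t2: "t2 \<in> B" "q2 \<in> t2" "psi q1 \<subseteq> t2" using psi[OF q(2)] q(3) by auto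
      obtain d1 d2 where e: "psi q1 = {d1,d2}" "d1 \<noteq> d2"
        using psi[OF q(1)] unfolding card_2_iff by blast
      have "t1 = t2" using share[OF t1(1) t2(1) e(2)] t1(3) t2(3) e(1) by auto
      have dD: "d1 \<in> D" "d2 \<in> D" using psi[OF q(1)] e(1) unfolding L_def by auto
      have sub: "{q1,q2,d1,d2} \<subseteq> t1" using t1 t2 \<open>t1 = t2\<close> e(1) by auto
      have "q1 \<noteq> d1" "q1 \<noteq> d2" "q2 \<noteq> d1" "q2 \<noteq> d2" using dD q by auto
      hence "card {q1,q2,d1,d2} = 4" using ne e(2) by simp
      hence "4 \<le> card t1" using card_mono[OF blk_fin[OF t1(1)] sub] by simp
      thus False using blk_card[OF t1(1)] by simp
    qed
    moreover have "psi ` (V - D) \<subseteq> {e. e \<subseteq> L \<and> card e = 2}" using psi by auto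
    ultimately have "card (V - D) \<le> card {e. e \<subseteq> L \<and> card e = 2}"
      using fL by (intro card_inj_on_le) auto
    also have "\<dots> = card L choose 2" using n_subsets[OF fL] by simp
    also have "\<dots> \<le> 3"
    proof -
      have "card L = 0 \<or> card L = 1 \<or> card L = 2 \<or> card L = 3" using cL by linarith
      thus ?thesis by (auto simp: numeral_eq_Suc)
    qed
    finally have "card (V - D) \<le> 3" .
    moreover have "card (V - D) = card V - card D" using DV fD by (simp add: card_Diff_subset)
    ultimately show ?thesis using cV cD True by simp
  next
    case False
    hence k7: "kk = 7" "card I = 7" using k6 kI f7 by auto
    have alldeg: "deg I d = 3" if d: "d \<in> D" for d
    proof -
      obtain y where y: "y \<in> I" "d \<in> y" using d unfolding D_def by auto
      have yB: "y \<in> B" using y IB by auto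
      have "card (y - {d}) = 2" using blk_card[OF yB] y by simp
      then obtain u w where uw: "y - {d} = {u,w}" "u \<noteq> w" unfolding card_2_iff by blast
      have "card I + 2 \<le> deg I d + deg I u + deg I w"
        using sumdeg[OF IB ind fI y(1), of d u w] uw y(2) by auto
      thus ?thesis using d3[rule_format, of d] d3[rule_format, of u] d3[rule_format, of w] k7 by linarith
    qed
    have img: "blk q ` D = star q" if q: "q \<in> V - D" for q
    proof -
      have "inj_on (blk q) D"
      proof (rule inj_onI, rule ccontr)
        fix d1 d2 assume "d1 \<in> D" "d2 \<in> D" "blk q d1 = blk q d2" "d1 \<noteq> d2"
        hence "deg I d1 \<le> 2" using Key[OF q] by blast
        thus False using alldeg \<open>d1 \<in> D\<close> by simp
      qed
      hence "card (blk q ` D) = card D" by (rule card_image)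
      hence "card (blk q ` D) = card (star q)" using cD star_card[of q] q k7 by auto
      moreover have "blk q ` D \<subseteq> star q" using blkq[OF q] by auto
      ultimately show ?thesis using card_subset_eq[OF star_fin] by metis
    qed
    have S2: "card {y\<in>I. y \<inter> z \<noteq> {}} = 3" if z: "z \<in> B - I" for z
    proof -
      have zB: "z \<in> B" using z by auto
      have "\<not> z \<subseteq> D"
      proof
        assume zD: "z \<subseteq> D"
        obtain u w x where "z = {u,w,x}" "u \<noteq> w" using blk_card[OF zB] unfolding card_3_iff by blast
        hence uw: "u \<in> z" "w \<in> z" "u \<noteq> w" by auto
        obtain y where y: "y \<in> I" "u \<in> y" "w \<in> y" using Cov[of u w] uw zD alldeg by blast
        have "y \<in> B" using y IB by auto
        hence "y = z" using share[OF _ zB uw(3)] y uw by metis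
        thus False using y z by simp
      qed
      then obtain q where q: "q \<in> z" "q \<notin> D" by auto
      have qV: "q \<in> V - D" using q blk_sub[OF zB] by auto
      have "z \<in> star q" using zB q unfolding star_def by simp
      then obtain d where d: "d \<in> D" "z = blk q d" using img[OF qV] by auto
      have dz: "d \<in> z" using blkq[OF qV d(1)] d(2) by simp
      have "{y\<in>I. y \<inter> z \<noteq> {}} = {y\<in>I. d \<in> y}"
      proof
        show "{y\<in>I. y \<inter> z \<noteq> {}} \<subseteq> {y\<in>I. d \<in> y}"
        proof
          fix y assume y: "y \<in> {y\<in>I. y \<inter> z \<noteq> {}}"
          then obtain w where w: "w \<in> y" "w \<in> z" by auto
          have wD: "w \<in> D" using yD y w by auto
          show "y \<in> {y\<in>I. d \<in> y}"
          proof (cases "w = d")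
            case True thus ?thesis using y w by auto
          next
            case False
            obtain y' where y': "y' \<in> I" "d \<in> y'" "w \<in> y'" using Cov[OF d(1) wD alldeg[OF d(1)]] by blast
            have "y' \<in> B" using y' IB by auto
            hence "y' = z" using share[OF _ zB False[symmetric]] y' w dz by metis
            thus ?thesis using y' z by simp
          qed
        qed
        show "{y\<in>I. d \<in> y} \<subseteq> {y\<in>I. y \<inter> z \<noteq> {}}" using dz by auto
      qed
      thus ?thesis using alldeg[OF d(1)] unfolding deg_def by simp
    qed
    show ?thesis using k7 S2 by simp
  qed
qed

end

context sts begin

lemma alpha_struct:
  assumes alpha: "alpha_set B zero_BIG_adj I" and k6: "kk \<ge> 6" and Vne: "V \<noteq> {}"
  shows "card I = kk" "\<forall>z\<in>B - I. card {y\<in>I. y \<inter> z \<noteq> {}} = 3"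
    "kk = 6 \<Longrightarrow> \<forall>q\<in>V. \<exists>y\<in>I. q \<in> y"
proof -
  have IB: "I \<subseteq> B" and ind: "\<forall>x\<in>I. \<forall>y\<in>I. x \<inter> y \<noteq> {}"
    using alpha unfolding alpha_set_def independent_set_def zero_BIG_adj_def by auto
  have fI: "finite I" using IB finB finite_subset by blast
  obtain p0 where p0: "p0 \<in> V" using Vne by blast
  have "independent_set B zero_BIG_adj (star p0)"
    unfolding independent_set_def zero_BIG_adj_def star_def by auto
  hence "card (star p0) \<le> card I" using alpha unfolding alpha_set_def by blast
  hence kI: "kk \<le> card I" using star_card[OF p0] by simp
  have "card I = kk \<and> (\<forall>z\<in>B - I. card {y\<in>I. y \<inter> z \<noteq> {}} = 3) \<and> (kk = 6 \<longrightarrow> (\<forall>q\<in>V. \<exists>y\<in>I. q \<in> y))"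
  proof (cases "\<exists>p. deg I p \<ge> 4")
    case True
    then obtain p where p: "deg I p \<ge> 4" by blast
    hence "{y\<in>I. p \<in> y} \<noteq> {}" unfolding deg_def by (metis card.empty not_numeral_le_zero)
    then obtain y where "y \<in> I" "p \<in> y" by auto
    hence pV: "p \<in> V" using IB blk_sub by auto
    have Ieq: "I = star p" using caseA[OF IB ind fI kI pV p] .
    have "kk \<ge> 1" using k6 by simp
    from caseA_props[OF Ieq pV this] show ?thesis using Ieq star_card[OF pV] by simp
  next
    case False
    hence "\<forall>p. \<not> 4 \<le> deg I p" by blast
    hence "\<forall>q. deg I q \<le> 3" proof (intro allI)
      fix q have "deg I q < 4" using \<open>\<forall>p. \<not> 4 \<le> deg I p\<close> by (simp add: not_le)
      thus "deg I q \<le> 3" by simp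
    qed
    from caseB[OF IB ind fI kI k6 Vne this] show ?thesis by simp
  qed
  thus "card I = kk" "\<forall>z\<in>B - I. card {y\<in>I. y \<inter> z \<noteq> {}} = 3"
    "kk = 6 \<Longrightarrow> \<forall>q\<in>V. \<exists>y\<in>I. q \<in> y" by auto
qed

lemma cn_iff: "z \<in> closed_nbhd B zero_BIG_adj y \<longleftrightarrow> z = y \<or> (z \<in> B \<and> y \<inter> z = {})"
  unfolding closed_nbhd_def nbhd_def zero_BIG_adj_def by auto

lemma not_silver:
  assumes k6: "kk \<ge> 6" and Vne: "V \<noteq> {}"
  shows "\<not> silver B zero_BIG_adj (card B - (3*kk - 2))"
proof
  define r where "r = card B - (3*kk - 2)"
  assume "silver B zero_BIG_adj (card B - (3*kk - 2))"
  then obtain I c where alpha: "alpha_set B zero_BIG_adj I"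
    and pc: "proper_coloring B zero_BIG_adj (r+1) c"
    and rb: "\<forall>x\<in>I. rainbow B zero_BIG_adj r c x"
    unfolding silver_def r_def by blast
  have IB: "I \<subseteq> B" using alpha unfolding alpha_set_def independent_set_def by auto
  note S = alpha_struct[OF alpha k6 Vne]
  have cB: "3 * card B = (2*kk+1) * kk" using cardB V_kk[OF Vne] by simp
  have "(2*kk+1) * kk \<ge> 13 * kk" using k6 by simp
  hence big: "r + 1 > kk" using cB k6 unfolding r_def by linarith
  have inj: "inj_on c (closed_nbhd B zero_BIG_adj y)" if y: "y \<in> I" for y
  proof -
    let ?N = "closed_nbhd B zero_BIG_adj y"
    have yB: "y \<in> B" using y IB by auto
    have NB: "?N \<subseteq> B" using yB cn_iff by auto
    have fN: "finite ?N" using NB finB finite_subset by blast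
    have "c ` ?N \<subseteq> {..<r+1}" using pc NB unfolding proper_coloring_def by auto
    moreover have "{..<r+1} \<subseteq> c ` ?N" using rb y unfolding rainbow_def by auto
    ultimately have "c ` ?N = {..<r+1}" by blast
    hence "card (c ` ?N) = card ?N" using cnbhd_card[OF yB Vne] unfolding r_def by simp
    thus ?thesis using fN inj_on_iff_eq_card by blast
  qed
  have getc: "\<exists>z. (z = y \<or> (z \<in> B \<and> y \<inter> z = {})) \<and> c z = j" if "y \<in> I" "j < r + 1" for y j
  proof -
    have "j \<in> c ` closed_nbhd B zero_BIG_adj y" using rb that unfolding rainbow_def by auto
    thus ?thesis using cn_iff by auto
  qed
  have all: "\<exists>y\<in>I. c y = j" if j: "j < r + 1" for j
  proof (rule ccontr)
    assume nj: "\<not> (\<exists>y\<in>I. c y = j)"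
    have "I \<noteq> {}" using S(1) k6 by auto
    then obtain y0 where y0: "y0 \<in> I" by auto
    obtain z where z: "z \<in> B" "y0 \<inter> z = {}" "c z = j" using getc[OF y0 j] nj y0 by blast
    have zI: "z \<notin> I" using nj z by auto
    have "card {y\<in>I. y \<inter> z \<noteq> {}} = 3" using S(2) z zI by auto
    hence "{y\<in>I. y \<inter> z \<noteq> {}} \<noteq> {}" by (metis card.empty zero_neq_numeral)
    then obtain y1 where y1: "y1 \<in> I" "y1 \<inter> z \<noteq> {}" by auto
    obtain z' where z': "z' \<in> B" "y1 \<inter> z' = {}" "c z' = j" using getc[OF y1(1) j] nj y1 by blast
    have z'I: "z' \<notin> I" using nj z' by auto
    have zz: "z \<noteq> z'" using y1 z' by auto
    have fI: "finite I" using IB finB finite_subset by blast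
    have Dc: "card {y\<in>I. y \<inter> w = {}} = kk - 3" if "w \<in> B" "w \<notin> I" for w
    proof -
      have "{y\<in>I. y \<inter> w = {}} = I - {y\<in>I. y \<inter> w \<noteq> {}}" by auto
      moreover have "card {y\<in>I. y \<inter> w \<noteq> {}} = 3" using S(2) that by auto
      ultimately show ?thesis using fI S(1) by (simp add: card_Diff_subset)
    qed
    let ?D1 = "{y\<in>I. y \<inter> z = {}}" and ?D2 = "{y\<in>I. y \<inter> z' = {}}"
    have disj: "?D1 \<inter> ?D2 = {}"
    proof (rule ccontr)
      assume "?D1 \<inter> ?D2 \<noteq> {}"
      then obtain y where y: "y \<in> I" "y \<inter> z = {}" "y \<inter> z' = {}" by auto
      have "z \<in> closed_nbhd B zero_BIG_adj y" "z' \<in> closed_nbhd B zero_BIG_adj y"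
        using cn_iff y z z' by auto
      hence "z = z'" using inj[OF y(1)] z(3) z'(3) unfolding inj_on_def by auto
      thus False using zz by simp
    qed
    have "card (?D1 \<union> ?D2) = card ?D1 + card ?D2" using disj fI by (intro card_Un_disjoint) auto
    hence cu: "card (?D1 \<union> ?D2) = 2 * (kk - 3)" using Dc[OF z(1) zI] Dc[OF z'(1) z'I] by simp
    have "card (?D1 \<union> ?D2) \<le> card I" using fI by (intro card_mono) auto
    hence k66: "kk = 6" using cu S(1) k6 by linarith
    hence "card (?D1 \<union> ?D2) = card I" using cu S(1) by simp
    hence Ieq: "?D1 \<union> ?D2 = I" using fI card_subset_eq[of I "?D1 \<union> ?D2"] by auto
    have "\<not> zero_BIG_adj z z'"
    proof
      assume "zero_BIG_adj z z'"
      hence "c z \<noteq> c z'" using pc z(1) z'(1) unfolding proper_coloring_def by blast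
      thus False using z(3) z'(3) by simp
    qed
    then obtain q where q: "q \<in> z" "q \<in> z'" unfolding zero_BIG_adj_def by auto
    have "q \<in> V" using q z(1) blk_sub by auto
    then obtain y where y: "y \<in> I" "q \<in> y" using S(3)[OF k66] by auto
    have "y \<in> ?D1 \<union> ?D2" using y Ieq by simp
    thus False using y q by auto
  qed
  have fI: "finite I" using IB finB finite_subset by blast
  have "{..<r+1} \<subseteq> c ` I" using all by auto
  hence "card {..<r+1} \<le> card (c ` I)" using fI by (intro card_mono) auto
  also have "\<dots> \<le> card I" using IB finB finite_subset card_image_le by blast
  finally show False using S(1) big by simp
qed

lemma regular: "V \<noteq> {} \<Longrightarrow> regular_graph B zero_BIG_adj (card B - (3*kk - 2))"
  unfolding regular_graph_def using nbhd_card by simp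

end

context sts begin

lemma seven:
  assumes cV: "card V = 7"
  shows "totally_silver B zero_BIG_adj (card B - (3*kk - 2))"
proof -
  have Vne: "V \<noteq> {}" using cV by auto
  have k: "kk = 3" using V_kk[OF Vne] cV by simp
  have cB: "card B = 7" using cardB cV k by simp
  have r0: "card B - (3*kk - 2) = 0" using cB k by simp
  have nb: "nbhd B zero_BIG_adj x = {}" if "x \<in> B" for x
  proof -
    have "card (nbhd B zero_BIG_adj x) = 0" using nbhd_card[OF that Vne] r0 by simp
    moreover have "finite (nbhd B zero_BIG_adj x)" using finB unfolding nbhd_def by simp
    ultimately show ?thesis by simp
  qed
  have "proper_coloring B zero_BIG_adj (0+1) (\<lambda>_. 0)"
    unfolding proper_coloring_def
  proof (intro conjI ballI impI)
    fix x y assume "x \<in> B" "y \<in> B" "zero_BIG_adj x y"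
    hence "y \<in> nbhd B zero_BIG_adj x" unfolding nbhd_def by simp
    thus "(0::nat) \<noteq> 0" using nb \<open>x \<in> B\<close> by simp
  qed simp
  moreover have "\<forall>x\<in>B. rainbow B zero_BIG_adj 0 (\<lambda>_. 0) x"
    unfolding rainbow_def closed_nbhd_def by auto
  ultimately show ?thesis unfolding totally_silver_def r0 by blast
qed

lemma nine_R:
  assumes cV: "card V = 9" and x: "x \<in> B" and y: "y \<in> B" and xy: "x \<inter> y = {}"
  shows "V - (x \<union> y) \<in> B" "nbhd B zero_BIG_adj x = {y, V - (x \<union> y)}"
proof -
  have Vne: "V \<noteq> {}" using cV by auto
  have k: "kk = 4" using V_kk[OF Vne] cV by simp
  have cB: "card B = 12" using cardB cV k by simp
  have nb2: "card (nbhd B zero_BIG_adj w) = 2" if "w \<in> B" for w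
    using nbhd_card[OF that Vne] cB k by simp
  have finN: "finite (nbhd B zero_BIG_adj w)" for w using finB unfolding nbhd_def by simp
  define R where "R = V - (x \<union> y)"
  have fx: "finite x" "finite y" using blk_fin x y by auto
  have "card (x \<union> y) = 6" using card_Un_disjoint[OF fx xy] blk_card x y by simp
  moreover have "x \<union> y \<subseteq> V" using blk_sub x y by auto
  ultimately have cR: "card R = 3" unfolding R_def using cV finV card_Diff_subset[of "x \<union> y" V] fx by simp
  have fR: "finite R" using finV unfolding R_def by simp
  have yN: "y \<in> nbhd B zero_BIG_adj x" and xN: "x \<in> nbhd B zero_BIG_adj y"
    using x y xy unfolding nbhd_def zero_BIG_adj_def by auto
  have RB: "R \<in> B"
  proof (rule ccontr)
    assume nRB: "R \<notin> B"
    have RV: "R \<subseteq> V" unfolding R_def by auto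
    have third: "rk \<notin> blk ri rj" if "ri \<in> R" "rj \<in> R" "rk \<in> R" "ri \<noteq> rj" "rk \<noteq> ri" "rk \<noteq> rj" for ri rj rk
    proof
      assume rk: "rk \<in> blk ri rj"
      have t: "blk ri rj \<in> B" "ri \<in> blk ri rj" "rj \<in> blk ri rj" using blk[of ri rj] that RV by auto
      have "{ri,rj,rk} \<subseteq> blk ri rj" using t rk by auto
      moreover have "card {ri,rj,rk} = 3" using that by auto
      ultimately have "blk ri rj = {ri,rj,rk}" using blk_card[OF t(1)] blk_fin[OF t(1)]
        by (metis card_subset_eq)
      moreover have "{ri,rj,rk} = R" using that cR fR
        by (metis card_subset_eq \<open>card {ri,rj,rk} = 3\<close> empty_subsetI insert_subset)
      ultimately show False using t(1) nRB by simp
    qed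
    have inS: "blk ri rj \<in> (nbhd B zero_BIG_adj x - {y}) \<union> (nbhd B zero_BIG_adj y - {x})"
      if r: "ri \<in> R" "rj \<in> R" "ri \<noteq> rj" for ri rj
    proof -
      let ?t = "blk ri rj"
      have t: "?t \<in> B" "ri \<in> ?t" "rj \<in> ?t" using blk[of ri rj] r RV by auto
      have "\<not> ?t \<subseteq> R"
      proof
        assume "?t \<subseteq> R"
        hence "?t = R" using blk_card[OF t(1)] cR fR card_subset_eq by metis
        thus False using t(1) nRB by simp
      qed
      then obtain w where w: "w \<in> ?t" "w \<notin> R" by auto
      have wV: "w \<in> V" using w t blk_sub by auto
      have wxy: "w \<in> x \<or> w \<in> y" using w wV unfolding R_def by auto
      have dist: "w \<noteq> ri" "w \<noteq> rj" using w r by auto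
      have "{ri,rj,w} \<subseteq> ?t" using t w by auto
      moreover have "card {ri,rj,w} = 3" using dist r by auto
      ultimately have teq: "?t = {ri,rj,w}" using blk_card[OF t(1)] blk_fin[OF t(1)]
        by (metis card_subset_eq)
      have rxy: "ri \<notin> x" "ri \<notin> y" "rj \<notin> x" "rj \<notin> y" using r unfolding R_def by auto
      show ?thesis
      proof (cases "w \<in> x")
        case True
        hence "w \<notin> y" using xy by auto
        hence "y \<inter> ?t = {}" using teq rxy by auto
        moreover have "?t \<noteq> x" using t(2) rxy by auto
        ultimately show ?thesis using t(1) unfolding nbhd_def zero_BIG_adj_def by auto
      next
        case False
        hence "w \<in> y" using wxy by simp
        hence "w \<notin> x" using xy by auto
        hence "x \<inter> ?t = {}" using teq rxy by auto
        moreover have "?t \<noteq> y" using t(2) rxy by auto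
        ultimately show ?thesis using t(1) unfolding nbhd_def zero_BIG_adj_def by auto
      qed
    qed
    obtain r1 r2 r3 where rr: "R = {r1,r2,r3}" "r1 \<noteq> r2" "r2 \<noteq> r3" "r1 \<noteq> r3"
      using cR unfolding card_3_iff by blast
    have rin: "r1 \<in> R" "r2 \<in> R" "r3 \<in> R" using rr by auto
    let ?S = "(nbhd B zero_BIG_adj x - {y}) \<union> (nbhd B zero_BIG_adj y - {x})"
    have sub: "{blk r1 r2, blk r1 r3, blk r2 r3} \<subseteq> ?S" using inS rin rr by auto
    have n1: "blk r1 r2 \<noteq> blk r1 r3"
      using third[of r1 r2 r3] blk[of r1 r3] rin rr RV by auto
    have n2: "blk r1 r2 \<noteq> blk r2 r3"
      using third[of r1 r2 r3] blk[of r2 r3] rin rr RV by auto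
    have n3: "blk r1 r3 \<noteq> blk r2 r3"
      using third[of r1 r3 r2] blk[of r2 r3] rin rr RV by auto
    have c3: "card {blk r1 r2, blk r1 r3, blk r2 r3} = 3" using n1 n2 n3 by simp
    have "card ?S \<le> card (nbhd B zero_BIG_adj x - {y}) + card (nbhd B zero_BIG_adj y - {x})"
      by (rule card_Un_le)
    also have "\<dots> = 2" using nb2[OF x] nb2[OF y] yN xN finN by simp
    finally have "card ?S \<le> 2" .
    moreover have "card {blk r1 r2, blk r1 r3, blk r2 r3} \<le> card ?S"
      using sub finN by (intro card_mono) auto
    ultimately show False using c3 by simp
  qed
  thus "V - (x \<union> y) \<in> B" unfolding R_def .
  have RN: "R \<in> nbhd B zero_BIG_adj x" using RB unfolding nbhd_def zero_BIG_adj_def R_def by auto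
  have "R \<noteq> y" using blk_ne[OF y] unfolding R_def by auto
  hence "card {y, R} = 2" by simp
  moreover have "{y, R} \<subseteq> nbhd B zero_BIG_adj x" using RN yN by auto
  ultimately have "{y, R} = nbhd B zero_BIG_adj x" using nb2[OF x] finN card_subset_eq by metis
  thus "nbhd B zero_BIG_adj x = {y, V - (x \<union> y)}" unfolding R_def by simp
qed

lemma nine:
  assumes cV: "card V = 9"
  shows "totally_silver B zero_BIG_adj (card B - (3*kk - 2))"
proof -
  have Vne: "V \<noteq> {}" using cV by auto
  have k: "kk = 4" using V_kk[OF Vne] cV by simp
  have cB: "card B = 12" using cardB cV k by simp
  have r2: "card B - (3*kk - 2) = 2" using cB k by simp
  let ?N = "closed_nbhd B zero_BIG_adj"
  have cn3: "card (?N x) = 3" if "x \<in> B" for x using cnbhd_card[OF that Vne] r2 by simp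
  have fN: "finite (?N x)" if "x \<in> B" for x using cn3[OF that] by (metis card.infinite zero_neq_numeral)
  have NB: "?N x \<subseteq> B" if "x \<in> B" for x using that unfolding closed_nbhd_def nbhd_def by auto
  have same: "?N z = ?N x" if x: "x \<in> B" and z: "z \<in> ?N x" for x z
  proof (cases "z = x")
    case False
    hence zN: "z \<in> nbhd B zero_BIG_adj x" using z unfolding closed_nbhd_def by simp
    hence zB: "z \<in> B" and xz: "x \<inter> z = {}" unfolding nbhd_def zero_BIG_adj_def by auto
    have "nbhd B zero_BIG_adj x = {z, V - (x \<union> z)}" using nine_R(2)[OF cV x zB xz] .
    moreover have "nbhd B zero_BIG_adj z = {x, V - (z \<union> x)}" using nine_R(2)[OF cV zB x] xz by auto
    ultimately show ?thesis unfolding closed_nbhd_def by (auto simp: Un_commute)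
  qed simp
  define g where "g Q = (SOME f. bij_betw f Q {..<3::nat})" for Q :: "'a set set"
  have gb: "bij_betw (g (?N x)) (?N x) {..<3}" if "x \<in> B" for x
  proof -
    have "\<exists>f. bij_betw f (?N x) {..<3::nat}"
      using finite_same_card_bij[OF fN[OF that], of "{..<3::nat}"] cn3[OF that] by simp
    thus ?thesis unfolding g_def by (rule someI_ex)
  qed
  define c where "c z = g (?N z) z" for z
  have cx: "c z = g (?N x) z" if "x \<in> B" "z \<in> ?N x" for x z
    unfolding c_def using same[OF that] by simp
  have img: "c ` ?N x = {..<3}" if "x \<in> B" for x
  proof -
    have "c ` ?N x = g (?N x) ` ?N x" using cx[OF that] by (auto simp: image_def)
    thus ?thesis using gb[OF that] unfolding bij_betw_def by simp
  qed
  have injc: "inj_on c (?N x)" if "x \<in> B" for x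
  proof -
    have "inj_on (g (?N x)) (?N x)" using gb[OF that] unfolding bij_betw_def by simp
    thus ?thesis using inj_on_cong[of "?N x" c "g (?N x)"] cx[OF that] by simp
  qed
  have xin: "x \<in> ?N x" for x unfolding closed_nbhd_def by simp
  have "proper_coloring B zero_BIG_adj (2+1) c"
    unfolding proper_coloring_def
  proof (intro conjI ballI impI)
    fix x assume x: "x \<in> B"
    have "c x \<in> c ` ?N x" using xin by simp
    thus "c x < 2 + 1" using img[OF x] by simp
  next
    fix x y assume x: "x \<in> B" and y: "y \<in> B" and a: "zero_BIG_adj x y"
    have "y \<in> ?N x" using y a unfolding closed_nbhd_def nbhd_def by simp
    moreover have "x \<noteq> y" using a blk_ne[OF x] unfolding zero_BIG_adj_def by auto
    ultimately show "c x \<noteq> c y" using injc[OF x] xin unfolding inj_on_def by metis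
  qed
  moreover have "\<forall>x\<in>B. rainbow B zero_BIG_adj 2 c x"
    unfolding rainbow_def using img by simp
  ultimately show ?thesis unfolding totally_silver_def r2 by blast
qed

end

theorem theorem8:
  fixes V :: "'a set" and B :: "'a set set" and v :: nat
  assumes "is_STS V B" and "card V = v"
  shows "((v mod 6 = 1 \<or> v mod 6 = 3) \<and> v > 9 \<longrightarrow>
           (\<exists>r. regular_graph B zero_BIG_adj r \<and> \<not> silver B zero_BIG_adj r)) \<and>
         (v = 7 \<or> v = 9 \<longrightarrow>
           (\<exists>r. regular_graph B zero_BIG_adj r \<and> totally_silver B zero_BIG_adj r))"
proof -
  interpret S: sts V B by (rule sts.intro) (rule assms(1))
  show ?thesis
  proof (intro conjI impI)
    assume h: "(v mod 6 = 1 \<or> v mod 6 = 3) \<and> v > 9"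
    have Vne: "V \<noteq> {}" using h assms(2) by auto
    have cv: "v = 2 * S.kk + 1" using S.V_kk[OF Vne] assms(2) by simp
    have "S.kk \<ge> 6" using h cv by presburger
    thus "\<exists>r. regular_graph B zero_BIG_adj r \<and> \<not> silver B zero_BIG_adj r"
      using S.regular[OF Vne] S.not_silver[OF _ Vne] by blast
  next
    assume h: "v = 7 \<or> v = 9"
    have Vne: "V \<noteq> {}" using h assms(2) by auto
    have "totally_silver B zero_BIG_adj (card B - (3 * S.kk - 2))"
      using h S.seven S.nine assms(2) by blast
    thus "\<exists>r. regular_graph B zero_BIG_adj r \<and> totally_silver B zero_BIG_adj r"
      using S.regular[OF Vne] by blast
  qed
qed

end
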